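(* Let $s\in\{0,\dots,r-3\}$ and $g\in\mathcal{V}_s$. Then for every $\alpha\in\mathbb{Q}$ the periodic function $m\mapsto g(m)e^{i\pi m^2\alpha/(2P)}$ has mean value zero; consequently, for every $\nu\in\mathbb{Z}_{\ge0}$ and $\alpha\in\mathbb{Q}$, the non-tangential limit $\lim_{\tau\to\alpha}\Theta(\tau;\nu,g,2P)$ from within $\mathbb{H}$ exists.
   Context: $r\ge3$; $p_1,\dots,p_r$ positive pairwise coprime, $p_2,\dots,p_r$ odd; $P=p_1\cdots p_r$, $\hat p_j=P/p_j$; $E=\{\pm1\}^r$. $\mathfrak{H}$: $\underline h\in\mathbb{Z}^r$ with $0\le h_j\le p_j$, $h_j/p_j\notin\mathbb{Z}$ for at least three $j$; $\mathfrak{L}$: those with $h_j$ even for $j\ge2$. $J^{\underline h}=\{j:p_j\mid h_j\}$, $\mathcal{N}^{\underline h}(\underline\varepsilon)=P+\sum_j\varepsilon_jh_j\hat p_j$. For $J\cap J^{\underline h}=\emptyset$: $g_J^{\underline h}(n)=\prod_{j\in J}\varepsilon_j$ if $n\equiv\mathcal{N}^{\underline h}(\underline\varepsilon)\bmod2P$ for some $\underline\varepsilon\in E$ (independent of the choice), else $0$. $\mathcal{V}_s=\mathrm{span}_{\mathbb{C}}\{g_J^{\underline\ell}:|J|\ge r-s,\ |J|\equiv r-s\bmod 2,\ \underline\ell\in\mathfrak{L},\ J\cap J^{\underline\ell}=\emptyset\}$. $\Theta(\tau;\nu,g,M)=\sum_{n\ge1}n^\nu g(n)e^{i\pi n^2\tau/M}$.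 *)

theory Defs
  imports "HOL-Analysis.Analysis" "HOL-Number_Theory.Cong"
begin

definition Pprod :: "nat \<Rightarrow> (nat \<Rightarrow> int) \<Rightarrow> int" where
  "Pprod r p = (\<Prod>j\<in>{1..r}. p j)"

text \<open>E = {+1,-1}^r, represented extensionally (value 1 outside 1..r).\<close>
definition signs :: "nat \<Rightarrow> (nat \<Rightarrow> int) set" where
  "signs r = {\<epsilon>. (\<forall>j\<in>{1..r}. \<epsilon> j = 1 \<or> \<epsilon> j = -1) \<and> (\<forall>j. j \<notin> {1..r} \<longrightarrow> \<epsilon> j = 1)}"

text \<open>The set frak H (vectors h in Z^r, represented extensionally with value 0 outside 1..r).\<close>
definition setH :: "nat \<Rightarrow> (nat \<Rightarrow> int) \<Rightarrow> (nat \<Rightarrow> int) set" where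
  "setH r p = {h. (\<forall>j. j \<notin> {1..r} \<longrightarrow> h j = 0) \<and>
                  (\<forall>j\<in>{1..r}. 0 \<le> h j \<and> h j \<le> p j) \<and>
                  3 \<le> card {j\<in>{1..r}. \<not> p j dvd h j}}"

definition setL :: "nat \<Rightarrow> (nat \<Rightarrow> int) \<Rightarrow> (nat \<Rightarrow> int) set" where
  "setL r p = {h \<in> setH r p. \<forall>j\<in>{2..r}. even (h j)}"

definition Jset :: "nat \<Rightarrow> (nat \<Rightarrow> int) \<Rightarrow> (nat \<Rightarrow> int) \<Rightarrow> nat set" where
  "Jset r p h = {j\<in>{1..r}. p j dvd h j}"

definition Nval :: "nat \<Rightarrow> (nat \<Rightarrow> int) \<Rightarrow> (nat \<Rightarrow> int) \<Rightarrow> (nat \<Rightarrow> int) \<Rightarrow> int" where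
  "Nval r p h \<epsilon> = Pprod r p + (\<Sum>j\<in>{1..r}. \<epsilon> j * h j * (Pprod r p div p j))"

text \<open>g_J^h(n): product of eps_j over J for a (any) eps with n = N^h(eps) mod 2P, else 0.\<close>
definition gJ :: "nat \<Rightarrow> (nat \<Rightarrow> int) \<Rightarrow> nat set \<Rightarrow> (nat \<Rightarrow> int) \<Rightarrow> int \<Rightarrow> complex" where
  "gJ r p J h n =
     (if \<exists>\<epsilon>\<in>signs r. [n = Nval r p h \<epsilon>] (mod (2 * Pprod r p))
      then of_int (\<Prod>j\<in>J. (SOME \<epsilon>. \<epsilon> \<in> signs r \<and> [n = Nval r p h \<epsilon>] (mod (2 * Pprod r p))) j)
      else 0)"

definition genV :: "nat \<Rightarrow> (nat \<Rightarrow> int) \<Rightarrow> nat \<Rightarrow> (int \<Rightarrow> complex) set" where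
  "genV r p s = {gJ r p J l | J l. J \<subseteq> {1..r} \<and> r - s \<le> card J \<and> [card J = r - s] (mod 2)
                   \<and> l \<in> setL r p \<and> J \<inter> Jset r p l = {}}"

definition Vspace :: "nat \<Rightarrow> (nat \<Rightarrow> int) \<Rightarrow> nat \<Rightarrow> (int \<Rightarrow> complex) set" where
  "Vspace r p s = {f. \<exists>S c. finite S \<and> S \<subseteq> genV r p s \<and> f = (\<lambda>n. \<Sum>\<phi>\<in>S. c \<phi> * \<phi> n)}"

definition Theta :: "complex \<Rightarrow> nat \<Rightarrow> (int \<Rightarrow> complex) \<Rightarrow> real \<Rightarrow> complex" where
  "Theta \<tau> \<nu> g M = (\<Sum>n. of_nat (Suc n) ^ \<nu> * g (int (Suc n)) *
                           exp (\<i> * pi * of_nat (Suc n)^2 * \<tau> / of_real M))"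

definition has_mean_value :: "(int \<Rightarrow> complex) \<Rightarrow> complex \<Rightarrow> bool" where
  "has_mean_value f L \<longleftrightarrow> ((\<lambda>N. (\<Sum>m=1..N. f (int m)) / of_nat N) \<longlonglongrightarrow> L)"

definition stolz :: "real \<Rightarrow> real \<Rightarrow> complex set" where
  "stolz \<alpha> C = {\<tau>. 0 < Im \<tau> \<and> \<bar>Re \<tau> - \<alpha>\<bar> \<le> C * Im \<tau>}"

definition nontangential_limit_exists :: "(complex \<Rightarrow> complex) \<Rightarrow> real \<Rightarrow> bool" where
  "nontangential_limit_exists f \<alpha> \<longleftrightarrow>
     (\<exists>L. \<forall>C>0. (f \<longlongrightarrow> L) (at (complex_of_real \<alpha>) within stolz \<alpha> C))"

end

theory Submission
  imports Defs "HOL-Complex_Analysis.Complex_Analysis"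
begin


definition dif :: "(nat \<Rightarrow> complex) \<Rightarrow> nat \<Rightarrow> complex" where
  "dif \<phi> n = \<phi> (Suc n) - \<phi> n"

definition cdif :: "(complex \<Rightarrow> complex) \<Rightarrow> complex \<Rightarrow> complex" where
  "cdif h z = h (z + 1) - h z"

lemma periodic_nat_mult:
  fixes T :: nat
  assumes "\<forall>n. f (n + T) = f n"
  shows "f (k * T + m) = f m"
proof (induction k)
  case (Suc k)
  have "f (Suc k * T + m) = f ((k * T + m) + T)" by (simp add: algebra_simps)
  then show ?case using assms Suc by simp
qed simp

lemma periodic_nat_mod:
  fixes T :: nat
  assumes "\<forall>n. f (n + T) = f n"
  shows "f n = f (n mod T)"
  using periodic_nat_mult[OF assms, of "n div T" "n mod T"] by simp

lemma periodic_bounded: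
  fixes f :: "nat \<Rightarrow> complex"
  assumes "0 < T" "\<forall>n. f (n + T) = f n"
  shows "\<exists>B. \<forall>n. norm (f n) \<le> B"
proof -
  have "norm (f n) \<le> Max ((\<lambda>m. norm (f m)) ` {..<T})" for n
    using periodic_nat_mod[OF assms(2), of n] assms(1)
    by (intro Max_ge) auto
  then show ?thesis by blast
qed

lemma summable_bounded_mult:
  fixes g \<phi> :: "nat \<Rightarrow> complex"
  assumes "\<forall>n. norm (g n) \<le> B" "summable (\<lambda>n. norm (\<phi> n))"
  shows "summable (\<lambda>n. g n * \<phi> n)"
proof (rule summable_norm_cancel, rule summable_comparison_test[where g="\<lambda>n. B * norm (\<phi> n)"])
  show "\<exists>N. \<forall>n\<ge>N. norm (norm (g n * \<phi> n)) \<le> B * norm (\<phi> n)"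
    using assms(1) by (auto simp: norm_mult intro!: mult_right_mono)
  show "summable (\<lambda>n. B * norm (\<phi> n))" using assms(2) by (rule summable_mult)
qed

lemma summable_dif:
  assumes "summable (\<lambda>n. norm (\<phi> n))"
  shows "summable (\<lambda>n. norm (dif \<phi> n))"
proof (rule summable_comparison_test[where g="\<lambda>n. norm (\<phi> (Suc n)) + norm (\<phi> n)"])
  show "\<exists>N. \<forall>n\<ge>N. norm (norm (dif \<phi> n)) \<le> norm (\<phi> (Suc n)) + norm (\<phi> n)"
    by (auto simp: dif_def norm_triangle_ineq4)
  show "summable (\<lambda>n. norm (\<phi> (Suc n)) + norm (\<phi> n))"
    using assms by (intro summable_add) (auto simp: summable_Suc_iff[of "\<lambda>n. norm (\<phi> n)"])
qed

lemma summable_difs: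
  assumes "summable (\<lambda>n. norm (\<phi> n))"
  shows "summable (\<lambda>n. norm ((dif ^^ k) \<phi> n))"
  by (induction k) (auto simp: assms summable_dif)

lemma sbp_step:
  fixes f :: "nat \<Rightarrow> complex"
  assumes T: "0 < T" "\<forall>n. f (n + T) = f n" "(\<Sum>n<T. f n) = 0"
  shows "\<exists>c f1. (\<forall>n. f1 (n + T) = f1 n) \<and> (\<Sum>n<T. f1 n) = 0 \<and>
     (\<forall>\<phi>. summable (\<lambda>n. norm (\<phi> n)) \<longrightarrow> (\<Sum>n. f n * \<phi> n) = c * \<phi> 0 + (\<Sum>n. f1 n * dif \<phi> n))"
proof -
  define S where "S n = (\<Sum>m<n. f m)" for n
  have Sper: "S (n + T) = S n" for n
  proof (induction n)
    case 0 then show ?case using T(3) by (simp add: S_def)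
  next
    case (Suc n)
    have "S (Suc n + T) = S (n + T) + f (n + T)" by (simp add: S_def)
    also have "\<dots> = S (Suc n)" using Suc T(2) by (simp add: S_def)
    finally show ?case .
  qed
  define c where "c = (\<Sum>n<T. S (Suc n)) / of_nat T"
  define f1 where "f1 n = c - S (Suc n)" for n
  define G where "G n = S n - c" for n
  have f1per: "\<forall>n. f1 (n + T) = f1 n"
    using Sper by (simp add: f1_def flip: add_Suc)
  have f1sum: "(\<Sum>n<T. f1 n) = 0"
    using T(1) by (simp add: f1_def sum_subtractf c_def)
  obtain B where B: "\<forall>n. norm (G n) \<le> B"
  proof -
    have "\<forall>n. G (n + T) = G n" using Sper by (simp add: G_def)
    from periodic_bounded[OF T(1) this] show ?thesis using that by blast
  qed
  have fG: "f n = G (Suc n) - G n" for n by (simp add: G_def S_def)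
  have main: "(\<Sum>n. f n * \<phi> n) = c * \<phi> 0 + (\<Sum>n. f1 n * dif \<phi> n)"
    if sp: "summable (\<lambda>n. norm (\<phi> n))" for \<phi>
  proof -
    have B1: "\<forall>n. norm (G (Suc n)) \<le> B" using B by blast
    have s1: "summable (\<lambda>n. G (Suc n) * \<phi> n)" by (rule summable_bounded_mult[OF B1 sp])
    have s2: "summable (\<lambda>n. G n * \<phi> n)" by (rule summable_bounded_mult[OF B sp])
    have sp': "summable (\<lambda>n. norm (\<phi> (Suc n)))" using sp by (simp add: summable_Suc_iff[of "\<lambda>n. norm (\<phi> n)"])
    have s3: "summable (\<lambda>n. G (Suc n) * \<phi> (Suc n))" by (rule summable_bounded_mult[OF B1 sp'])
    have "(\<Sum>n. f n * \<phi> n) = (\<Sum>n. G (Suc n) * \<phi> n - G n * \<phi> n)"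
      by (simp add: fG algebra_simps)
    also have "\<dots> = (\<Sum>n. G (Suc n) * \<phi> n) - (\<Sum>n. G n * \<phi> n)"
      using s1 s2 by (rule suminf_diff[symmetric])
    also have "(\<Sum>n. G n * \<phi> n) = G 0 * \<phi> 0 + (\<Sum>n. G (Suc n) * \<phi> (Suc n))"
      using suminf_split_head[OF s2] by simp
    also have "(\<Sum>n. G (Suc n) * \<phi> n) - (G 0 * \<phi> 0 + (\<Sum>n. G (Suc n) * \<phi> (Suc n)))
        = (\<Sum>n. G (Suc n) * \<phi> n - G (Suc n) * \<phi> (Suc n)) - G 0 * \<phi> 0"
      using suminf_diff[OF s1 s3] by simp
    also have "(\<Sum>n. G (Suc n) * \<phi> n - G (Suc n) * \<phi> (Suc n)) = (\<Sum>n. f1 n * dif \<phi> n)"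
      by (intro suminf_cong) (simp add: f1_def G_def dif_def algebra_simps)
    finally show ?thesis by (simp add: G_def S_def)
  qed
  show ?thesis using f1per f1sum main by blast
qed

lemma sbp_iter:
  fixes f :: "nat \<Rightarrow> complex"
  assumes T: "0 < T" "\<forall>n. f (n + T) = f n" "(\<Sum>n<T. f n) = 0"
  shows "\<exists>b fK. (\<forall>n. fK (n + T) = fK n) \<and> (\<Sum>n<T. fK n) = 0 \<and>
     (\<forall>\<phi>. summable (\<lambda>n. norm (\<phi> n)) \<longrightarrow>
        (\<Sum>n. f n * \<phi> n) = (\<Sum>k<K. b k * (dif ^^ k) \<phi> 0) + (\<Sum>n. fK n * (dif ^^ K) \<phi> n))"
proof (induction K)
  case 0
  show ?case using T by (intro exI[of _ "\<lambda>_. 0"] exI[of _ f]) auto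
next
  case (Suc K)
  then obtain b fK where fK: "\<forall>n. fK (n + T) = fK n" "(\<Sum>n<T. fK n) = 0"
    and eq: "\<forall>\<phi>. summable (\<lambda>n. norm (\<phi> n)) \<longrightarrow>
        (\<Sum>n. f n * \<phi> n) = (\<Sum>k<K. b k * (dif ^^ k) \<phi> 0) + (\<Sum>n. fK n * (dif ^^ K) \<phi> n)"
    by blast
  obtain c f1 where f1: "\<forall>n. f1 (n + T) = f1 n" "(\<Sum>n<T. f1 n) = 0"
    and eq1: "\<forall>\<phi>. summable (\<lambda>n. norm (\<phi> n)) \<longrightarrow> (\<Sum>n. fK n * \<phi> n) = c * \<phi> 0 + (\<Sum>n. f1 n * dif \<phi> n)"
    using sbp_step[OF T(1) fK] by blast
  have "(\<Sum>n. f n * \<phi> n) = (\<Sum>k<Suc K. (b(K := c)) k * (dif ^^ k) \<phi> 0) + (\<Sum>n. f1 n * (dif ^^ Suc K) \<phi> n)"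
    if sp: "summable (\<lambda>n. norm (\<phi> n))" for \<phi>
  proof -
    have "(\<Sum>k<K. (b(K := c)) k * (dif ^^ k) \<phi> 0) = (\<Sum>k<K. b k * (dif ^^ k) \<phi> 0)"
      by (intro sum.cong) auto
    then show ?thesis
      using eq[rule_format, OF sp] eq1[rule_format, OF summable_difs[OF sp, of K]] by simp
  qed
  then show ?case using f1 by blast
qed



lemma dif_cdif:
  "(dif ^^ k) (\<lambda>n. h (of_nat (Suc n))) n = (cdif ^^ k) h (of_nat (Suc n))"
proof (induction k arbitrary: n)
  case 0 then show ?case by simp
next
  case (Suc k)
  show ?case using Suc[of "Suc n"] Suc[of n]
    by (simp add: dif_def cdif_def add.commute)
qed

lemma shift_holo:
  assumes "h holomorphic_on UNIV" shows "(\<lambda>w. h (w + 1)) holomorphic_on UNIV"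
proof -
  have "(h \<circ> (\<lambda>w. w + 1)) holomorphic_on UNIV"
    by (rule holomorphic_on_compose) (auto intro!: holomorphic_intros intro: holomorphic_on_subset[OF assms])
  then show ?thesis by (simp add: o_def)
qed

lemma cdif_holo: "h holomorphic_on UNIV \<Longrightarrow> cdif h holomorphic_on UNIV"
  unfolding cdif_def by (intro holomorphic_intros shift_holo)

lemma higher_deriv_cdif:
  assumes "h holomorphic_on UNIV"
  shows "(deriv ^^ K) (cdif h) y = (deriv ^^ K) h (y + 1) - (deriv ^^ K) h y"
proof -
  have h1: "(\<lambda>w. h (w + 1)) holomorphic_on UNIV"
    by (rule shift_holo[OF assms])
  have "(deriv ^^ K) (cdif h) y = (deriv ^^ K) (\<lambda>w. h (w + 1)) y - (deriv ^^ K) h y"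
    unfolding cdif_def by (rule higher_deriv_diff[OF h1 assms]) auto
  also have "(deriv ^^ K) (\<lambda>w. h (w + 1)) y = (deriv ^^ K) (\<lambda>w. h (1 * w + 1)) y" by simp
  also have "\<dots> = 1 ^ K * (deriv ^^ K) h (1 * y + 1)"
    by (rule higher_deriv_compose_linear'[OF assms open_UNIV open_UNIV]) auto
  finally show ?thesis by simp
qed

lemma cdif_bound:
  assumes "h holomorphic_on UNIV"
    and "\<And>t. 0 \<le> t \<Longrightarrow> t \<le> real K \<Longrightarrow> norm ((deriv ^^ K) h (x + of_real t)) \<le> B"
  shows "norm ((cdif ^^ K) h x) \<le> B"
  using assms
proof (induction K arbitrary: h)
  case 0
  have "norm ((deriv ^^ 0) h (x + of_real 0)) \<le> B" by (rule 0(2)) auto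
  then show ?case by simp
next
  case (Suc K)
  have eqK: "(cdif ^^ Suc K) h = (cdif ^^ K) (cdif h)" by (simp only: funpow_Suc_right o_def)
  have bnd: "norm ((cdif ^^ K) (cdif h) x) \<le> B"
  proof (rule Suc.IH[OF cdif_holo[OF Suc.prems(1)]])
    fix t assume t: "0 \<le> t" "t \<le> real K"
    define y where "y = x + of_real t"
    define g where "g = (deriv ^^ K) h"
    have gh: "g holomorphic_on UNIV" unfolding g_def
      by (rule holomorphic_higher_deriv[OF Suc.prems(1)]) auto
    have "norm (g (y + 1) - g y) \<le> B * norm ((y + 1) - y)"
    proof (rule field_differentiable_bound[of "closed_segment y (y+1)" g "deriv g"])
      show "convex (closed_segment y (y + 1))" by simp
      show "(g has_field_derivative deriv g z) (at z within closed_segment y (y + 1))" for z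
        by (rule holomorphic_derivI[OF gh]) auto
      show "norm (deriv g z) \<le> B" if zS: "z \<in> closed_segment y (y + 1)" for z
      proof -
        obtain u where u: "0 \<le> u" "u \<le> 1" "z = (1 - u) *\<^sub>R y + u *\<^sub>R (y + 1)"
          using zS by (auto simp: in_segment)
        have z: "z = x + of_real (t + u)"
          using u(3) unfolding y_def scaleR_conv_of_real by (simp add: algebra_simps)
        have "deriv g = (deriv ^^ Suc K) h" by (simp add: g_def)
        have "norm ((deriv ^^ Suc K) h (x + of_real (t + u))) \<le> B"
          by (rule Suc.prems(2)) (use t u in auto)
        then show ?thesis using z \<open>deriv g = _\<close> by simp
      qed
    qed (rule ends_in_segment)+
    then have "norm (g (y + 1) - g y) \<le> B" by simp
    moreover have "(deriv ^^ K) (cdif h) (x + of_real t) = g (y + 1) - g y"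
      unfolding g_def y_def by (rule higher_deriv_cdif[OF Suc.prems(1)])
    ultimately show "norm ((deriv ^^ K) (cdif h) (x + of_real t)) \<le> B" by simp
  qed
  show ?case unfolding eqK by (rule bnd)
qed



lemma Im_sq_nonneg:
  fixes y C :: real and u w :: complex
  assumes y: "0 < y" and C: "0 < C" and w: "0 \<le> Im w" "\<bar>Re w\<bar> \<le> C * Im w"
    and u: "norm u \<le> y / (3 * (C + 1))"
  shows "0 \<le> Im ((of_real y + u)^2 * w)"
proof -
  define d where "d = 1 / (3 * (C + 1))"
  have d: "0 < d" "d \<le> 1" "3 * d * (C + 1) = 1" using C by (auto simp: d_def field_simps)
  define a where "a = norm u"
  have a: "0 \<le> a" "a \<le> d * y" using u by (auto simp: a_def d_def)
  have eq: "(of_real y + u)^2 * w = of_real (y^2) * w + (2 * of_real y * u + u^2) * w"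
    by (simp add: power2_eq_square algebra_simps)
  have h1: "Im ((of_real y + u)^2 * w) = y^2 * Im w + Im ((2 * of_real y * u + u^2) * w)"
    unfolding eq by simp
  have h2: "norm ((2 * of_real y * u + u^2) * w) \<le> (2 * y * a + a^2) * norm w"
  proof -
    have "norm (2 * of_real y * u + u^2) \<le> norm (2 * of_real y * u) + norm (u^2)"
      by (rule norm_triangle_ineq)
    also have "\<dots> = 2 * y * a + a^2" using y by (simp add: a_def norm_mult norm_power)
    finally show ?thesis by (simp add: norm_mult mult_right_mono)
  qed
  have h4: "norm w \<le> (C + 1) * Im w" using cmod_le[of w] w by (simp add: algebra_simps)
  have h5: "2 * y * a + a^2 \<le> 3 * d * y^2"
  proof -
    have "2 * y * a \<le> 2 * y * (d * y)" using a y by (intro mult_left_mono) auto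
    moreover have "a^2 \<le> (d * y)^2" using a by (intro power_mono) auto
    moreover have "(d * y)^2 \<le> d * y^2" using d y
      by (simp add: power2_eq_square mult_right_mono mult_left_mono mult.assoc)
    ultimately show ?thesis by (simp add: power2_eq_square algebra_simps)
  qed
  have "(2 * y * a + a^2) * norm w \<le> (3 * d * y^2) * ((C + 1) * Im w)"
    using h4 h5 a y d by (intro mult_mono) auto
  also have "\<dots> = (3 * d * (C + 1)) * (y^2 * Im w)" by (simp add: algebra_simps)
  also have "\<dots> = y^2 * Im w" using d(3) by simp
  finally have "\<bar>Im ((2 * of_real y * u + u^2) * w)\<bar> \<le> y^2 * Im w"
    using abs_Im_le_cmod[of "(2 * of_real y * u + u^2) * w"] h2 by linarith
  then show ?thesis using h1 by linarith
qed

lemma Phi_deriv_bound: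
  fixes y C c :: real and w :: complex
  assumes y: "0 < y" and C: "0 < C" and w: "0 \<le> Im w" "\<bar>Re w\<bar> \<le> C * Im w" and c: "0 \<le> c"
  shows "norm ((deriv ^^ K) (\<lambda>\<zeta>. \<zeta>^\<nu> * exp (\<i> * of_real c * \<zeta>^2 * w)) (complex_of_real y))
           \<le> fact K * (2 * y)^\<nu> / (y / (3 * (C + 1)))^K"
proof (rule Cauchy_inequality)
  show "(\<lambda>\<zeta>. \<zeta>^\<nu> * exp (\<i> * of_real c * \<zeta>^2 * w)) holomorphic_on ball (complex_of_real y) (y / (3 * (C + 1)))"
    by (intro holomorphic_intros)
  show "continuous_on (cball (complex_of_real y) (y / (3 * (C + 1)))) (\<lambda>\<zeta>. \<zeta>^\<nu> * exp (\<i> * of_real c * \<zeta>^2 * w))"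
  proof -
    have "(\<lambda>\<zeta>. \<zeta>^\<nu> * exp (\<i> * of_real c * \<zeta>^2 * w)) holomorphic_on UNIV" by (intro holomorphic_intros)
    then show ?thesis by (rule continuous_on_subset[OF holomorphic_on_imp_continuous_on]) auto
  qed
  show "0 < y / (3 * (C + 1))" using y C by simp
  fix x assume x: "norm (complex_of_real y - x) = y / (3 * (C + 1))"
  define u where "u = x - complex_of_real y"
  have xu: "x = complex_of_real y + u" by (simp add: u_def)
  have nu: "norm u \<le> y / (3 * (C + 1))" using x norm_minus_commute[of x "complex_of_real y"] by (simp add: u_def)
  have im: "0 \<le> Im ((complex_of_real y + u)^2 * w)" by (rule Im_sq_nonneg[OF y C w nu])
  have "y / (3 * (C + 1)) \<le> y" using y C by (simp add: field_simps)
  moreover have "norm x \<le> norm (complex_of_real y) + norm u" unfolding xu by (rule norm_triangle_ineq)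
  ultimately have nx: "norm x \<le> 2 * y" using nu y by simp
  have "norm (exp (\<i> * of_real c * x^2 * w)) = exp (Re (\<i> * of_real c * x^2 * w))"
    by (rule norm_exp_eq_Re)
  also have "Re (\<i> * of_real c * x^2 * w) = - (c * Im (x^2 * w))"
    by (simp add: mult.assoc)
  also have "exp (- (c * Im (x^2 * w))) \<le> 1" using im c unfolding xu by simp
  finally have ne: "norm (exp (\<i> * of_real c * x^2 * w)) \<le> 1" .
  have np: "norm (x^\<nu>) \<le> (2 * y)^\<nu>" unfolding norm_power by (intro power_mono nx) simp
  have "norm (x^\<nu> * exp (\<i> * of_real c * x^2 * w)) = norm (x^\<nu>) * norm (exp (\<i> * of_real c * x^2 * w))"
    by (rule norm_mult)
  also have "\<dots> \<le> (2 * y)^\<nu> * 1"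
    by (rule mult_mono[OF np ne]) (use y in auto)
  finally show "norm (x^\<nu> * exp (\<i> * of_real c * x^2 * w)) \<le> (2 * y)^\<nu>" by simp
qed



lemma term_bound:
  fixes C c :: real and w :: complex
  assumes C: "0 < C" and w: "0 \<le> Im w" "\<bar>Re w\<bar> \<le> C * Im w" and c: "0 \<le> c"
  shows "norm ((dif ^^ (\<nu>+2)) (\<lambda>n. (of_nat (Suc n))^\<nu> * exp (\<i> * of_real c * (of_nat (Suc n))^2 * w)) n)
         \<le> fact (\<nu>+2) * 2^\<nu> * (3*(C+1))^(\<nu>+2) / (real (Suc n))^2"
proof -
  define h where "h = (\<lambda>\<zeta>::complex. \<zeta>^\<nu> * exp (\<i> * of_real c * \<zeta>^2 * w))"
  define D where "D = 3 * (C + 1)"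
  have D: "0 < D" using C by (simp add: D_def)
  have "(\<lambda>n. (of_nat (Suc n))^\<nu> * exp (\<i> * of_real c * (of_nat (Suc n))^2 * w)) = (\<lambda>n. h (of_nat (Suc n)))"
    by (simp add: h_def)
  then have eq: "(dif ^^ (\<nu>+2)) (\<lambda>n. (of_nat (Suc n))^\<nu> * exp (\<i> * of_real c * (of_nat (Suc n))^2 * w)) n
      = (cdif ^^ (\<nu>+2)) h (of_nat (Suc n))"
    using dif_cdif[of "\<nu>+2" h n] by simp
  have hh: "h holomorphic_on UNIV" unfolding h_def by (intro holomorphic_intros)
  have "norm ((cdif ^^ (\<nu>+2)) h (of_nat (Suc n))) \<le> fact (\<nu>+2) * 2^\<nu> * D^(\<nu>+2) / (real (Suc n))^2"
  proof (rule cdif_bound[OF hh])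
    fix t :: real assume t: "0 \<le> t" "t \<le> real (\<nu>+2)"
    define y where "y = real (Suc n) + t"
    have y: "0 < y" "real (Suc n) \<le> y" using t by (auto simp: y_def)
    have yc: "of_nat (Suc n) + complex_of_real t = complex_of_real y" by (simp add: y_def)
    have alg: "F * (2 * y)^\<nu> / (y / D)^(\<nu>+2) = F * 2^\<nu> * D^(\<nu>+2) / y^2" for F :: real
      using y D by (simp add: power_mult_distrib power_divide power_add power2_eq_square field_simps)
    have "norm ((deriv ^^ (\<nu>+2)) h (complex_of_real y)) \<le> fact (\<nu>+2) * (2 * y)^\<nu> / (y / D)^(\<nu>+2)"
      unfolding h_def D_def by (rule Phi_deriv_bound[OF y(1) C w c])
    also have "fact (\<nu>+2) * (2 * y)^\<nu> / (y / D)^(\<nu>+2) = fact (\<nu>+2) * 2^\<nu> * D^(\<nu>+2) / y^2"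
      using alg by blast
    also have "\<dots> \<le> fact (\<nu>+2) * 2^\<nu> * D^(\<nu>+2) / (real (Suc n))^2"
      using y D by (intro divide_left_mono power_mono mult_pos_pos) auto
    finally show "norm ((deriv ^^ (\<nu>+2)) h (of_nat (Suc n) + complex_of_real t)) \<le> fact (\<nu>+2) * 2^\<nu> * D^(\<nu>+2) / (real (Suc n))^2"
      unfolding yc .
  qed
  then show ?thesis unfolding eq D_def .
qed



lemma exp_ge_pow_fact:
  fixes x :: real assumes "0 \<le> x" shows "x^k / fact k \<le> exp x"
proof -
  have "(\<Sum>n\<in>{k}. x^n /\<^sub>R fact n) \<le> (\<Sum>n. x^n /\<^sub>R fact n)"
    by (rule sum_le_suminf[OF summable_exp_generic]) (use assms in auto)
  then show ?thesis by (simp add: exp_def divide_inverse_commute)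
qed

lemma psi_summable:
  fixes c :: real and w :: complex
  assumes c: "0 < c" and w: "0 < Im w"
  shows "summable (\<lambda>n. norm ((of_nat (Suc n))^\<nu> * exp (\<i> * of_real c * (of_nat (Suc n))^2 * w)))"
proof -
  define a where "a = c * Im w"
  have a: "0 < a" using c w by (simp add: a_def)
  define M where "M = fact (\<nu>+2) / a^(\<nu>+2)"
  have bound: "norm ((of_nat (Suc n))^\<nu> * exp (\<i> * of_real c * (of_nat (Suc n))^2 * w)) \<le> M * (1 / (real n + 1)^2)" for n
  proof -
    define m where "m = real (Suc n)"
    have m: "1 \<le> m" by (simp add: m_def)
    have nm: "cmod (1 + complex_of_nat n) = 1 + real n"
      by (metis norm_of_nat of_nat_Suc)
    have "norm ((of_nat (Suc n))^\<nu> * exp (\<i> * of_real c * (of_nat (Suc n))^2 * w)) = m^\<nu> * exp (- (a * m^2))"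
      by (simp add: nm norm_mult norm_power norm_exp_eq_Re m_def a_def mult.assoc algebra_simps)
    also have "exp (- (a * m^2)) \<le> exp (- (a * m))"
      using a m by (simp add: power2_eq_square)
    also have "exp (- (a * m)) = 1 / exp (a * m)" by (simp add: exp_minus field_simps)
    also have "\<dots> \<le> 1 / ((a * m)^(\<nu>+2) / fact (\<nu>+2))"
      using a m by (intro divide_left_mono exp_ge_pow_fact mult_pos_pos divide_pos_pos) auto
    also have "m^\<nu> * (1 / ((a * m)^(\<nu>+2) / fact (\<nu>+2))) = M * (1 / m^2)"
      using a m by (simp add: M_def power_mult_distrib power_add power2_eq_square field_simps)
    finally show ?thesis using m by (simp add: m_def mult_left_mono add.commute)
  qed
  have "summable (\<lambda>n. 1 / real ((n + 1)^2))"
    by (rule sums_summable[OF inverse_squares_sums])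
  then have "summable (\<lambda>n. M * (1 / (real n + 1)^2))"
    by (intro summable_mult) (simp add: add.commute)
  then show ?thesis by (rule summable_comparison_test'[where N=0]) (use bound in auto)
qed

lemma dif_tendsto:
  assumes "\<And>n. ((\<lambda>\<tau>. \<Psi> \<tau> n) \<longlongrightarrow> \<Psi>0 n) F"
  shows "((\<lambda>\<tau>. (dif ^^ k) (\<Psi> \<tau>) n) \<longlongrightarrow> (dif ^^ k) \<Psi>0 n) F"
proof (induction k arbitrary: n)
  case 0 then show ?case using assms by simp
next
  case (Suc k)
  show ?case using tendsto_diff[OF Suc[of "Suc n"] Suc[of n]] by (simp add: dif_def)
qed



lemma nt_limit_generic:
  fixes f :: "nat \<Rightarrow> complex" and c \<alpha> :: real
  assumes T: "0 < T" "\<forall>n. f (n + T) = f n" "(\<Sum>n<T. f n) = 0" and c: "0 < c"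
  shows "\<exists>L. \<forall>C>0. ((\<lambda>\<tau>. \<Sum>n. f n * ((of_nat (Suc n))^\<nu> * exp (\<i> * of_real c * (of_nat (Suc n))^2 * (\<tau> - of_real \<alpha>))))
            \<longlongrightarrow> L) (at (of_real \<alpha>) within stolz \<alpha> C)"
proof -
  define K where "K = \<nu> + 2"
  obtain b fK where fKp: "\<forall>n. fK (n + T) = fK n"
    and eq: "\<forall>\<phi>. summable (\<lambda>n. norm (\<phi> n)) \<longrightarrow>
        (\<Sum>n. f n * \<phi> n) = (\<Sum>k<K. b k * (dif ^^ k) \<phi> 0) + (\<Sum>n. fK n * (dif ^^ K) \<phi> n)"
    using sbp_iter[OF T, of K] by blast
  obtain Bf where Bf: "\<forall>n. norm (fK n) \<le> Bf" using periodic_bounded[OF T(1) fKp] by blast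
  have Bf0: "0 \<le> Bf" using Bf norm_ge_zero order_trans by blast
  define \<psi> where "\<psi> \<tau> = (\<lambda>n. (of_nat (Suc n))^\<nu> * exp (\<i> * of_real c * (of_nat (Suc n))^2 * (\<tau> - of_real \<alpha>)))" for \<tau>
  define R where "R \<tau> = (\<Sum>k<K. b k * (dif ^^ k) (\<psi> \<tau>) 0) + (\<Sum>n. fK n * (dif ^^ K) (\<psi> \<tau>) n)" for \<tau>
  have fun_eq: "(\<lambda>\<tau>. \<Sum>n. f n * ((of_nat (Suc n))^\<nu> * exp (\<i> * of_real c * (of_nat (Suc n))^2 * (\<tau> - of_real \<alpha>))))
      = (\<lambda>\<tau>. \<Sum>n. f n * \<psi> \<tau> n)" by (simp add: \<psi>_def)
  have "((\<lambda>\<tau>. \<Sum>n. f n * \<psi> \<tau> n) \<longlongrightarrow> R (of_real \<alpha>)) (at (of_real \<alpha>) within stolz \<alpha> C)" if C: "0 < C" for C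
  proof -
    define S where "S = stolz \<alpha> C"
    define Mc where "Mc = fact (\<nu>+2) * 2^\<nu> * (3*(C+1))^(\<nu>+2)"
    have tb: "norm (fK n * (dif ^^ K) (\<psi> \<tau>) n) \<le> Bf * (Mc / (real (Suc n))^2)"
      if "\<tau> \<in> insert (of_real \<alpha>) S" for \<tau> n
    proof -
      have w: "0 \<le> Im (\<tau> - of_real \<alpha>)" "\<bar>Re (\<tau> - of_real \<alpha>)\<bar> \<le> C * Im (\<tau> - of_real \<alpha>)"
        using that by (auto simp: S_def stolz_def)
      have "norm ((dif ^^ K) (\<psi> \<tau>) n) \<le> Mc / (real (Suc n))^2"
        unfolding K_def \<psi>_def Mc_def by (rule term_bound[OF C w]) (use c in simp)
      then show ?thesis unfolding norm_mult using Bf Bf0 by (intro mult_mono) auto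
    qed
    have sM: "summable (\<lambda>n. Bf * (Mc / (real (Suc n))^2))"
    proof -
      have "summable (\<lambda>n. 1 / real ((n + 1)^2))"
        by (rule sums_summable[OF inverse_squares_sums])
      then have "summable (\<lambda>n. (Bf * Mc) * (1 / real ((n + 1)^2)))" by (rule summable_mult)
      then show ?thesis by simp
    qed
    have sR: "summable (\<lambda>n. fK n * (dif ^^ K) (\<psi> \<tau>) n)" if "\<tau> \<in> insert (of_real \<alpha>) S" for \<tau>
      by (rule summable_norm_cancel, rule summable_comparison_test'[OF sM, where N=0]) (use tb[OF that] in auto)
    have eqR: "(\<Sum>n. f n * \<psi> \<tau> n) = R \<tau>" if "\<tau> \<in> S" for \<tau>
    proof -
      have "0 < Im (\<tau> - of_real \<alpha>)" using that by (simp add: S_def stolz_def)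
      then have "summable (\<lambda>n. norm (\<psi> \<tau> n))" unfolding \<psi>_def by (rule psi_summable[OF c])
      then show ?thesis using eq by (simp add: R_def)
    qed
    have psi_t: "((\<lambda>\<tau>. \<psi> \<tau> n) \<longlongrightarrow> \<psi> (of_real \<alpha>) n) (at (of_real \<alpha>) within S)" for n
    proof -
      have "((\<lambda>\<tau>. (of_nat (Suc n))^\<nu> * exp (\<i> * of_real c * (of_nat (Suc n))^2 * (\<tau> - of_real \<alpha>)))
           \<longlongrightarrow> (of_nat (Suc n))^\<nu> * exp (\<i> * of_real c * (of_nat (Suc n))^2 * (of_real \<alpha> - of_real \<alpha>)))
           (at (of_real \<alpha>) within S)"
        by (intro tendsto_intros)
      then show ?thesis by (simp add: \<psi>_def)
    qed
    have lim1: "((\<lambda>\<tau>. \<Sum>k<K. b k * (dif ^^ k) (\<psi> \<tau>) 0) \<longlongrightarrow> (\<Sum>k<K. b k * (dif ^^ k) (\<psi> (of_real \<alpha>)) 0))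
        (at (of_real \<alpha>) within S)"
      by (intro tendsto_sum tendsto_mult_left dif_tendsto psi_t)
    have lim2: "((\<lambda>\<tau>. \<Sum>n. fK n * (dif ^^ K) (\<psi> \<tau>) n) \<longlongrightarrow> (\<Sum>n. fK n * (dif ^^ K) (\<psi> (of_real \<alpha>)) n))
        (at (of_real \<alpha>) within S)"
    proof (rule swap_uniform_limit[where f="\<lambda>N \<tau>. \<Sum>i<N. fK i * (dif ^^ K) (\<psi> \<tau>) i"
          and g="\<lambda>N. \<Sum>i<N. fK i * (dif ^^ K) (\<psi> (of_real \<alpha>)) i" and F=sequentially])
      show "\<forall>\<^sub>F N in sequentially. ((\<lambda>\<tau>. \<Sum>i<N. fK i * (dif ^^ K) (\<psi> \<tau>) i) \<longlongrightarrow>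
          (\<Sum>i<N. fK i * (dif ^^ K) (\<psi> (of_real \<alpha>)) i)) (at (of_real \<alpha>) within S)"
        by (intro always_eventually allI tendsto_sum tendsto_mult_left dif_tendsto psi_t)
      show "((\<lambda>N. \<Sum>i<N. fK i * (dif ^^ K) (\<psi> (of_real \<alpha>)) i) \<longlongrightarrow> (\<Sum>n. fK n * (dif ^^ K) (\<psi> (of_real \<alpha>)) n)) sequentially"
        by (rule summable_LIMSEQ, rule sR) simp
      show "uniform_limit S (\<lambda>N \<tau>. \<Sum>i<N. fK i * (dif ^^ K) (\<psi> \<tau>) i) (\<lambda>\<tau>. \<Sum>n. fK n * (dif ^^ K) (\<psi> \<tau>) n) sequentially"
        by (rule Weierstrass_m_test[OF _ sM]) (use tb in auto)
    qed simp
    have limR: "(R \<longlongrightarrow> R (of_real \<alpha>)) (at (of_real \<alpha>) within S)"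
      unfolding R_def by (rule tendsto_add[OF lim1 lim2])
    have ev: "\<forall>\<^sub>F \<tau> in at (of_real \<alpha>) within S. R \<tau> = (\<Sum>n. f n * \<psi> \<tau> n)"
      unfolding eventually_at_filter by (rule always_eventually) (auto simp: eqR)
    show ?thesis using tendsto_cong[OF ev] limR unfolding S_def by blast
  qed
  then show ?thesis unfolding fun_eq by blast
qed



definition hatP :: "nat \<Rightarrow> (nat \<Rightarrow> int) \<Rightarrow> nat \<Rightarrow> int" where
  "hatP r p j = (\<Prod>i\<in>{1..r}-{j}. p i)"

lemma Pprod_split:
  assumes "j \<in> {1..r}" shows "Pprod r p = p j * hatP r p j"
  unfolding Pprod_def hatP_def using assms by (simp add: prod.remove)

lemma Pprod_pos:
  assumes "\<forall>j\<in>{1..r}. 0 < p j" shows "0 < Pprod r p"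
  unfolding Pprod_def using assms by (intro prod_pos) auto

lemma hatP_pos:
  assumes "\<forall>j\<in>{1..r}. 0 < p j" shows "0 < hatP r p j"
  unfolding hatP_def using assms by (intro prod_pos) auto

lemma div_hatP:
  assumes "\<forall>j\<in>{1..r}. 0 < p j" "j \<in> {1..r}" shows "Pprod r p div p j = hatP r p j"
proof -
  have "0 < p j" using assms by blast
  then have "p j \<noteq> 0" by simp
  then show ?thesis using Pprod_split[OF assms(2), of p] by simp
qed

lemma dvd_hatP:
  assumes "i \<in> {1..r}" "i \<noteq> j" shows "p i dvd hatP r p j"
  unfolding hatP_def using assms by (intro dvd_prodI) auto

lemma coprime_hatP:
  assumes cop: "\<forall>i\<in>{1..r}. \<forall>j\<in>{1..r}. i \<noteq> j \<longrightarrow> coprime (p i) (p j)" and j: "j \<in> {1..r}"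
  shows "coprime (p j) (hatP r p j)"
  unfolding hatP_def using assms by (intro prod_coprime_right) auto

lemma Nval_diff:
  "Nval r p l \<epsilon> - Nval r p l \<delta> = (\<Sum>k\<in>{1..r}. (\<epsilon> k - \<delta> k) * l k * (Pprod r p div p k))"
  unfolding Nval_def by (simp add: sum_subtractf[symmetric] algebra_simps)

lemma sum_split_at:
  fixes g :: "nat \<Rightarrow> int"
  assumes "k \<in> {1..r}" shows "(\<Sum>i\<in>{1..r}. g i) = g k + (\<Sum>i\<in>{1..r}-{k}. g i)"
  using assms by (simp add: sum.remove)

lemma signs_pm: "\<epsilon> \<in> signs r \<Longrightarrow> k \<in> {1..r} \<Longrightarrow> \<epsilon> k = 1 \<or> \<epsilon> k = -1"
  by (auto simp: signs_def)

lemma signs_agree_odd: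
  assumes pos: "\<forall>j\<in>{1..r}. 0 < p j"
    and cop: "\<forall>i\<in>{1..r}. \<forall>j\<in>{1..r}. i \<noteq> j \<longrightarrow> coprime (p i) (p j)"
    and oddp: "odd (p k)" and k: "k \<in> {1..r}"
    and \<epsilon>: "\<epsilon> \<in> signs r" and \<delta>: "\<delta> \<in> signs r"
    and cg: "[Nval r p l \<epsilon> = Nval r p l \<delta>] (mod (2 * Pprod r p))"
    and nd: "\<not> p k dvd l k"
  shows "\<epsilon> k = \<delta> k"
proof (rule ccontr)
  assume ne: "\<epsilon> k \<noteq> \<delta> k"
  define t where "t i = (\<epsilon> i - \<delta> i) * l i * (Pprod r p div p i)" for i
  have "p k dvd 2 * Pprod r p" using Pprod_split[OF k, of p] by simp
  then have "p k dvd (\<Sum>i\<in>{1..r}. t i)"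
    using cg unfolding cong_iff_dvd_diff Nval_diff t_def by (rule dvd_trans)
  moreover have "p k dvd (\<Sum>i\<in>{1..r}-{k}. t i)"
  proof (rule dvd_sum)
    fix i assume i: "i \<in> {1..r}-{k}"
    have "p k dvd hatP r p i" using i k by (intro dvd_hatP) auto
    then show "p k dvd t i" using i pos by (simp add: t_def div_hatP)
  qed
  ultimately have "p k dvd t k" using sum_split_at[OF k, of t] by (metis dvd_add_left_iff)
  then have "p k dvd (\<epsilon> k - \<delta> k) * (l k * hatP r p k)" using pos k by (simp add: t_def div_hatP mult.assoc)
  moreover have "\<epsilon> k - \<delta> k = 2 \<or> \<epsilon> k - \<delta> k = -2" using signs_pm[OF \<epsilon> k] signs_pm[OF \<delta> k] ne by auto
  ultimately have "p k dvd 2 * (l k * hatP r p k)" by auto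
  moreover have "coprime (p k) 2" using oddp by simp
  ultimately have "p k dvd l k * hatP r p k" using coprime_dvd_mult_right_iff by blast
  moreover have "coprime (p k) (hatP r p k)" by (rule coprime_hatP[OF cop k])
  ultimately have "p k dvd l k" using coprime_dvd_mult_left_iff by blast
  with nd show False by simp
qed



lemma dvd_range_cases:
  fixes a b :: int
  assumes "0 < a" "a dvd b" "0 \<le> b" "b \<le> a" shows "b = 0 \<or> b = a"
proof -
  obtain q where q: "b = a * q" using assms(2) by blast
  have "0 \<le> q" using assms q by (metis mult_less_0_iff not_le)
  moreover have "q \<le> 1" using assms q by (metis mult.right_neutral mult_le_cancel_left_pos)
  ultimately have "q = 0 \<or> q = 1" by auto
  then show ?thesis using q by auto
qed

lemma signs_agree:
  assumes pos: "\<forall>j\<in>{1..r}. 0 < p j"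
    and cop: "\<forall>i\<in>{1..r}. \<forall>j\<in>{1..r}. i \<noteq> j \<longrightarrow> coprime (p i) (p j)"
    and oddp: "\<forall>j\<in>{2..r}. odd (p j)"
    and l: "l \<in> setL r p"
    and \<epsilon>: "\<epsilon> \<in> signs r" and \<delta>: "\<delta> \<in> signs r"
    and cg: "[Nval r p l \<epsilon> = Nval r p l \<delta>] (mod (2 * Pprod r p))"
    and i: "i \<in> {1..r}" and nd: "\<not> p i dvd l i"
  shows "\<epsilon> i = \<delta> i"
proof (cases "i = 1")
  case False
  then have "i \<in> {2..r}" using i by auto
  then show ?thesis using signs_agree_odd[OF pos cop _ i \<epsilon> \<delta> cg nd] oddp by blast
next
  case True
  show ?thesis
  proof (rule ccontr)
    assume ne: "\<epsilon> i \<noteq> \<delta> i"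
    define t where "t k = (\<epsilon> k - \<delta> k) * l k * (Pprod r p div p k)" for k
    have lrange: "0 \<le> l k \<and> l k \<le> p k" if "k \<in> {1..r}" for k
      using l that by (auto simp: setL_def setH_def)
    have A: "2 * Pprod r p dvd t k" if k: "k \<in> {2..r}" for k
    proof (cases "\<epsilon> k = \<delta> k")
      case True then show ?thesis by (simp add: t_def)
    next
      case False
      have k1: "k \<in> {1..r}" using k by auto
      have "p k dvd l k"
        using signs_agree_odd[OF pos cop _ k1 \<epsilon> \<delta> cg] oddp k False by blast
      then have "l k = 0 \<or> l k = p k" using dvd_range_cases lrange[OF k1] pos k1 by blast
      moreover have "\<epsilon> k - \<delta> k = 2 \<or> \<epsilon> k - \<delta> k = -2"
        using signs_pm[OF \<epsilon> k1] signs_pm[OF \<delta> k1] False by auto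
      moreover have "p k * (Pprod r p div p k) = Pprod r p"
        using Pprod_split[OF k1, of p] div_hatP[OF pos k1] by simp
      ultimately show ?thesis unfolding t_def by (auto simp: mult.assoc)
    qed
    have "2 * Pprod r p dvd (\<Sum>k\<in>{1..r}. t k)"
      using cg unfolding cong_iff_dvd_diff Nval_diff t_def .
    moreover have "2 * Pprod r p dvd (\<Sum>k\<in>{1..r}-{1}. t k)"
    proof (rule dvd_sum)
      fix k assume "k \<in> {1..r}-{1}"
      then have "k \<in> {2..r}" by auto
      then show "2 * Pprod r p dvd t k" by (rule A)
    qed
    ultimately have "2 * Pprod r p dvd t 1" using sum_split_at[OF i[unfolded True], of t]
      by (metis dvd_add_left_iff)
    then have "2 * Pprod r p dvd (\<epsilon> 1 - \<delta> 1) * (l 1 * hatP r p 1)"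
      using pos i True by (simp add: t_def div_hatP mult.assoc)
    moreover have "\<epsilon> 1 - \<delta> 1 = 2 \<or> \<epsilon> 1 - \<delta> 1 = -2"
      using signs_pm[OF \<epsilon> i] signs_pm[OF \<delta> i] ne True by auto
    ultimately have "2 * Pprod r p dvd 2 * (l 1 * hatP r p 1)" by auto
    then have "Pprod r p dvd l 1 * hatP r p 1" by simp
    then have "p 1 * hatP r p 1 dvd l 1 * hatP r p 1" using Pprod_split[OF i[unfolded True], of p] by simp
    moreover have "hatP r p 1 \<noteq> 0" using hatP_pos[OF pos, of 1] by simp
    ultimately have "p 1 dvd l 1" by simp
    then show False using nd True by simp
  qed
qed

lemma gJ_eval:
  assumes pos: "\<forall>j\<in>{1..r}. 0 < p j"
    and cop: "\<forall>i\<in>{1..r}. \<forall>j\<in>{1..r}. i \<noteq> j \<longrightarrow> coprime (p i) (p j)"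
    and oddp: "\<forall>j\<in>{2..r}. odd (p j)"
    and l: "l \<in> setL r p" and J: "J \<subseteq> {1..r}" "J \<inter> Jset r p l = {}"
    and \<epsilon>: "\<epsilon> \<in> signs r" and cg: "[n = Nval r p l \<epsilon>] (mod (2 * Pprod r p))"
  shows "gJ r p J l n = of_int (\<Prod>i\<in>J. \<epsilon> i)"
proof -
  define Q where "Q \<delta> \<longleftrightarrow> \<delta> \<in> signs r \<and> [n = Nval r p l \<delta>] (mod (2 * Pprod r p))" for \<delta>
  have ex: "\<exists>\<delta>\<in>signs r. [n = Nval r p l \<delta>] (mod (2 * Pprod r p))" using \<epsilon> cg by blast
  have "Q (SOME \<delta>. Q \<delta>)" by (rule someI[of Q \<epsilon>]) (use \<epsilon> cg in \<open>simp add: Q_def\<close>)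
  then have d: "(SOME \<delta>. Q \<delta>) \<in> signs r" "[n = Nval r p l (SOME \<delta>. Q \<delta>)] (mod (2 * Pprod r p))"
    by (auto simp: Q_def)
  have "(\<Prod>i\<in>J. (SOME \<delta>. Q \<delta>) i) = (\<Prod>i\<in>J. \<epsilon> i)"
  proof (rule prod.cong[OF refl])
    fix i assume iJ: "i \<in> J"
    have i: "i \<in> {1..r}" using iJ J by auto
    have nd: "\<not> p i dvd l i" using iJ J i by (auto simp: Jset_def)
    have "[Nval r p l (SOME \<delta>. Q \<delta>) = Nval r p l \<epsilon>] (mod (2 * Pprod r p))"
      using d(2) cg by (metis cong_sym cong_trans)
    then show "(SOME \<delta>. Q \<delta>) i = \<epsilon> i"
      by (rule signs_agree[OF pos cop oddp l d(1) \<epsilon> _ i nd])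
  qed
  then show ?thesis using ex unfolding gJ_def Q_def by simp
qed

lemma gJ_cong:
  assumes "[n = n'] (mod (2 * Pprod r p))"
  shows "gJ r p J l n = gJ r p J l n'"
proof -
  have eq: "[n = x] (mod (2 * Pprod r p)) \<longleftrightarrow> [n' = x] (mod (2 * Pprod r p))" for x
    using assms by (metis cong_sym cong_trans)
  show ?thesis unfolding gJ_def eq ..
qed



lemma flip_signs:
  assumes "\<epsilon> \<in> signs r" "j \<in> {1..r}" shows "\<epsilon>(j := - \<epsilon> j) \<in> signs r"
  using assms by (auto simp: signs_def)

lemma flip_cong:
  assumes pos: "\<forall>j\<in>{1..r}. 0 < p j"
    and cop: "\<forall>i\<in>{1..r}. \<forall>j\<in>{1..r}. i \<noteq> j \<longrightarrow> coprime (p i) (p j)"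
    and j: "j \<in> {1..r}" and oddj: "odd (p j)"
    and cg: "[n = Nval r p l \<epsilon>] (mod (2 * Pprod r p))"
    and c1: "[n' = - n] (mod p j)" and c2: "[n' = n] (mod (2 * hatP r p j))"
  shows "[n' = Nval r p l (\<epsilon>(j := - \<epsilon> j))] (mod (2 * Pprod r p))"
proof -
  define \<epsilon>' where "\<epsilon>' = \<epsilon>(j := - \<epsilon> j)"
  define P where "P = Pprod r p"
  define s where "s = (\<Sum>i\<in>{1..r}-{j}. \<epsilon> i * l i * (P div p i))"
  have PP: "P = p j * hatP r p j" unfolding P_def by (rule Pprod_split[OF j])
  have hj: "P div p j = hatP r p j" unfolding P_def by (rule div_hatP[OF pos j])
  have N1: "Nval r p l \<epsilon> = P + \<epsilon> j * l j * hatP r p j + s"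
    unfolding Nval_def P_def[symmetric] s_def using sum_split_at[OF j] hj by simp
  have s': "(\<Sum>i\<in>{1..r}-{j}. \<epsilon>' i * l i * (P div p i)) = s"
    unfolding s_def \<epsilon>'_def by (intro sum.cong) auto
  have N2: "Nval r p l \<epsilon>' = P - \<epsilon> j * l j * hatP r p j + s"
    unfolding Nval_def P_def[symmetric] using sum_split_at[OF j, of "\<lambda>i. \<epsilon>' i * l i * (P div p i)"] hj s'
    by (simp add: \<epsilon>'_def)
  have ps: "p j dvd s"
    unfolding s_def
  proof (rule dvd_sum)
    fix i assume i: "i \<in> {1..r}-{j}"
    have "p j dvd hatP r p i" using i j by (intro dvd_hatP) auto
    then show "p j dvd \<epsilon> i * l i * (P div p i)" using i pos by (simp add: P_def div_hatP)
  qed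
  have d0: "2 * P dvd n - Nval r p l \<epsilon>" using cg by (simp add: cong_iff_dvd_diff P_def)
  have m1: "p j dvd n' - Nval r p l \<epsilon>'"
  proof -
    have a: "p j dvd n' + n" using c1 by (simp add: cong_iff_dvd_diff)
    have "p j dvd 2 * P" using PP by simp
    then have b: "p j dvd n - Nval r p l \<epsilon>" using d0 by (rule dvd_trans)
    have c: "p j dvd Nval r p l \<epsilon> + Nval r p l \<epsilon>'"
    proof -
      have "Nval r p l \<epsilon> + Nval r p l \<epsilon>' = 2 * P + 2 * s" using N1 N2 by simp
      then show ?thesis using ps PP by simp
    qed
    have "n' - Nval r p l \<epsilon>' = (n' + n) - (n - Nval r p l \<epsilon>) - (Nval r p l \<epsilon> + Nval r p l \<epsilon>')" by simp
    then show ?thesis using dvd_diff[OF dvd_diff[OF a b] c] by simp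
  qed
  have m2: "2 * hatP r p j dvd n' - Nval r p l \<epsilon>'"
  proof -
    have a: "2 * hatP r p j dvd n' - n" using c2 by (simp add: cong_iff_dvd_diff)
    have "2 * hatP r p j dvd 2 * P" using PP by simp
    then have b: "2 * hatP r p j dvd n - Nval r p l \<epsilon>" using d0 by (rule dvd_trans)
    have c: "2 * hatP r p j dvd Nval r p l \<epsilon> - Nval r p l \<epsilon>'"
    proof -
      have "Nval r p l \<epsilon> - Nval r p l \<epsilon>' = (2 * hatP r p j) * (\<epsilon> j * l j)" using N1 N2 by simp
      then show ?thesis by simp
    qed
    have "n' - Nval r p l \<epsilon>' = (n' - n) + (n - Nval r p l \<epsilon>) + (Nval r p l \<epsilon> - Nval r p l \<epsilon>')" by simp
    then show ?thesis using dvd_add[OF dvd_add[OF a b] c] by simp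
  qed
  have cp: "coprime (p j) (2 * hatP r p j)"
    using oddj coprime_hatP[OF cop j] by simp
  have "p j * (2 * hatP r p j) dvd n' - Nval r p l \<epsilon>'" by (rule divides_mult[OF m1 m2 cp])
  moreover have "p j * (2 * hatP r p j) = 2 * P" using PP by simp
  ultimately show ?thesis by (simp add: cong_iff_dvd_diff P_def \<epsilon>'_def)
qed

lemma gJ_anti:
  assumes pos: "\<forall>j\<in>{1..r}. 0 < p j"
    and cop: "\<forall>i\<in>{1..r}. \<forall>j\<in>{1..r}. i \<noteq> j \<longrightarrow> coprime (p i) (p j)"
    and oddp: "\<forall>j\<in>{2..r}. odd (p j)"
    and l: "l \<in> setL r p" and J: "J \<subseteq> {1..r}" "J \<inter> Jset r p l = {}"
    and jJ: "j \<in> J" and j2: "2 \<le> j"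
    and c1: "[n' = - n] (mod p j)" and c2: "[n' = n] (mod (2 * hatP r p j))"
  shows "gJ r p J l n' = - gJ r p J l n"
proof -
  have j: "j \<in> {1..r}" using jJ J by auto
  have oddj: "odd (p j)" using oddp j j2 by auto
  have c1': "[n = - n'] (mod p j)" using c1
    by (simp add: cong_iff_dvd_diff add.commute)
  have c2': "[n = n'] (mod (2 * hatP r p j))" using c2 by (rule cong_sym)
  show ?thesis
  proof (cases "\<exists>\<epsilon>\<in>signs r. [n = Nval r p l \<epsilon>] (mod (2 * Pprod r p))")
    case True
    then obtain \<epsilon> where \<epsilon>: "\<epsilon> \<in> signs r" and cg: "[n = Nval r p l \<epsilon>] (mod (2 * Pprod r p))" by blast
    have e1: "gJ r p J l n = of_int (\<Prod>i\<in>J. \<epsilon> i)" by (rule gJ_eval[OF pos cop oddp l J \<epsilon> cg])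
    have e2: "gJ r p J l n' = of_int (\<Prod>i\<in>J. (\<epsilon>(j := - \<epsilon> j)) i)"
      by (rule gJ_eval[OF pos cop oddp l J flip_signs[OF \<epsilon> j] flip_cong[OF pos cop j oddj cg c1 c2]])
    have fin: "finite J" using J(1) finite_subset by blast
    have "(\<Prod>i\<in>J. (\<epsilon>(j := - \<epsilon> j)) i) = - \<epsilon> j * (\<Prod>i\<in>J-{j}. \<epsilon> i)"
    proof -
      have "(\<Prod>i\<in>J-{j}. (\<epsilon>(j := - \<epsilon> j)) i) = (\<Prod>i\<in>J-{j}. \<epsilon> i)" by (rule prod.cong) auto
      then show ?thesis using prod.remove[OF fin jJ, of "\<epsilon>(j := - \<epsilon> j)"] by simp
    qed
    also have "\<dots> = - (\<Prod>i\<in>J. \<epsilon> i)" using prod.remove[OF fin jJ, of \<epsilon>] by simp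
    finally show ?thesis using e1 e2 by simp
  next
    case False
    have "\<not> (\<exists>\<delta>\<in>signs r. [n' = Nval r p l \<delta>] (mod (2 * Pprod r p)))"
    proof
      assume "\<exists>\<delta>\<in>signs r. [n' = Nval r p l \<delta>] (mod (2 * Pprod r p))"
      then obtain \<delta> where \<delta>: "\<delta> \<in> signs r" and cg: "[n' = Nval r p l \<delta>] (mod (2 * Pprod r p))" by blast
      have "[n = Nval r p l (\<delta>(j := - \<delta> j))] (mod (2 * Pprod r p))"
        by (rule flip_cong[OF pos cop j oddj cg c1' c2'])
      then show False using False flip_signs[OF \<delta> j] by blast
    qed
    then show ?thesis using False by (simp add: gJ_def)
  qed
qed



lemma periodic_int_nat:
  fixes G :: "int \<Rightarrow> 'a"
  assumes "\<forall>m. G (m + M) = G m" shows "G (m + int k * M) = G m"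
proof (induction k)
  case (Suc k)
  have "G (m + int (Suc k) * M) = G ((m + int k * M) + M)" by (simp add: algebra_simps)
  then show ?case using assms Suc by simp
qed simp

lemma periodic_int_mult:
  fixes G :: "int \<Rightarrow> 'a"
  assumes "\<forall>m. G (m + M) = G m" shows "G (m + k * M) = G m"
proof (cases "0 \<le> k")
  case True
  then obtain k' where "k = int k'" by (metis nonneg_eq_int)
  then show ?thesis using periodic_int_nat[OF assms] by simp
next
  case False
  then obtain k' where k: "k = - int k'" by (metis neg_int_cases not_le minus_minus nonneg_eq_int neg_0_le_iff_le less_imp_le)
  have "G ((m + k * M) + int k' * M) = G (m + k * M)" by (rule periodic_int_nat[OF assms])
  then show ?thesis using k by (simp add: algebra_simps)
qed

lemma periodic_int_mod:
  fixes G :: "int \<Rightarrow> 'a"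
  assumes "\<forall>m. G (m + M) = G m" shows "G (m mod M) = G m"
  using periodic_int_mult[OF assms, of "m mod M" "m div M"] by (simp add: mod_div_mult_eq)

lemma inv_sum_zero:
  fixes G :: "int \<Rightarrow> complex" and M e :: int
  assumes M: "0 < M" and per: "\<forall>m. G (m + M) = G m" and e: "[e * e = 1] (mod M)"
    and anti: "\<forall>m. G (e * m) = - G m"
  shows "(\<Sum>n<nat M. G (int n)) = 0"
proof -
  define \<sigma> where "\<sigma> n = nat ((e * int n) mod M)" for n
  have \<sigma>_range: "\<sigma> n \<in> {..<nat M}" for n using M by (simp add: \<sigma>_def)
  have \<sigma>_int: "int (\<sigma> n) = (e * int n) mod M" for n using M by (simp add: \<sigma>_def)
  have \<sigma>\<sigma>: "\<sigma> (\<sigma> n) = n" if "n \<in> {..<nat M}" for n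
  proof -
    have "(e * int (\<sigma> n)) mod M = (e * (e * int n)) mod M" unfolding \<sigma>_int by (simp add: mod_mult_right_eq)
    also have "\<dots> = ((e * e) * int n) mod M" by (simp add: mult.assoc)
    also have "\<dots> = (1 * int n) mod M" using e unfolding cong_def by (metis mod_mult_left_eq)
    also have "\<dots> = int n" using that M by simp
    finally show ?thesis by (simp add: \<sigma>_def)
  qed
  have "(\<Sum>n<nat M. G (int n)) = (\<Sum>n<nat M. - G (int n))"
  proof (rule sum.reindex_bij_witness[of _ \<sigma> \<sigma>])
    fix n assume "n \<in> {..<nat M}"
    show "\<sigma> (\<sigma> n) = n" by (rule \<sigma>\<sigma>) fact
    show "\<sigma> n \<in> {..<nat M}" by (rule \<sigma>_range)
    show "\<sigma> (\<sigma> n) = n" by (rule \<sigma>\<sigma>) fact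
    show "\<sigma> n \<in> {..<nat M}" by (rule \<sigma>_range)
    have "G (int (\<sigma> n)) = G (e * int n)" unfolding \<sigma>_int by (rule periodic_int_mod[OF per])
    then show "- G (int (\<sigma> n)) = G (int n)" using anti by simp
  qed
  then show ?thesis by (simp add: sum_negf)
qed

lemma decomp:
  fixes w u :: int
  assumes "0 < w"
  shows "\<exists>a c k. w = a * c \<and> 0 < a \<and> 0 < c \<and> coprime a u \<and> c dvd u ^ k"
  using assms
proof (induction "nat w" arbitrary: w rule: less_induct)
  case less
  show ?case
  proof (cases "coprime w u")
    case True
    then show ?thesis using less.prems by (intro exI[of _ w] exI[of _ 1] exI[of _ 0]) auto
  next
    case False
    define d where "d = gcd w u"
    have d0: "0 < d" using less.prems by (simp add: d_def)
    have d1: "d \<noteq> 1" using False by (simp add: d_def coprime_iff_gcd_eq_1)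
    have d2: "2 \<le> d" using d0 d1 by simp
    obtain w' where w': "w = d * w'" unfolding d_def by (meson gcd_dvd1 dvd_def)
    have w'0: "0 < w'" using w' d0 less.prems by (simp add: zero_less_mult_iff)
    have "w' < w" using w' d2 w'0 by (simp add: mult_strict_right_mono[of 1 d w'] )
    then have "nat w' < nat w" using w'0 by simp
    then obtain a c k where ack: "w' = a * c" "0 < a" "0 < c" "coprime a u" "c dvd u ^ k"
      using less.hyps w'0 by blast
    have "d dvd u" by (simp add: d_def)
    then have "d * c dvd u * u ^ k" using ack(5) by (rule mult_dvd_mono)
    then show ?thesis using ack w' d0
      by (intro exI[of _ a] exI[of _ "d * c"] exI[of _ "Suc k"]) (auto simp: ac_simps)
  qed
qed

lemma sum_periods_nat:
  fixes G :: "nat \<Rightarrow> complex"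
  assumes "\<forall>n. G (n + T) = G n"
  shows "(\<Sum>n<k * T. G n) = of_nat k * (\<Sum>n<T. G n)"
proof -
  have "(\<Sum>n<k * T. G n) = (\<Sum>m<k. sum G {m * T..<m * T + T})" by (rule sum.nat_group[symmetric])
  also have "\<dots> = (\<Sum>m<k. (\<Sum>n<T. G n))"
  proof (rule sum.cong[OF refl])
    fix m
    have "sum G {m * T..<m * T + T} = sum G {0 + m * T..<T + m * T}" by (simp add: add.commute)
    also have "\<dots> = (\<Sum>i\<in>{0..<T}. G (i + m * T))" by (rule sum.shift_bounds_nat_ivl)
    also have "\<dots> = (\<Sum>i<T. G i)"
      using periodic_nat_mult[OF assms] by (simp add: atLeast0LessThan add.commute)
    finally show "sum G {m * T..<m * T + T} = (\<Sum>n<T. G n)" .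
  qed
  also have "\<dots> = of_nat k * (\<Sum>n<T. G n)" by simp
  finally show ?thesis .
qed



lemma gen_sum_zero:
  fixes X :: "int \<Rightarrow> complex" and M0 :: int
  assumes pos: "\<forall>j\<in>{1..r}. 0 < p j"
    and cop: "\<forall>i\<in>{1..r}. \<forall>j\<in>{1..r}. i \<noteq> j \<longrightarrow> coprime (p i) (p j)"
    and oddp: "\<forall>j\<in>{2..r}. odd (p j)"
    and r3: "3 \<le> r" and s: "s \<le> r - 3"
    and \<phi>: "\<phi> \<in> genV r p s"
    and M0: "0 < M0" "2 * Pprod r p dvd M0"
    and X: "\<forall>m1 m2. [m1^2 = m2^2] (mod M0) \<longrightarrow> X m1 = X m2"
  shows "(\<Sum>n<nat M0. \<phi> (int n) * X (int n)) = 0"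
proof -
  obtain J l where \<phi>J: "\<phi> = gJ r p J l" and J: "J \<subseteq> {1..r}" "r - s \<le> card J"
      and l: "l \<in> setL r p" and JJ: "J \<inter> Jset r p l = {}"
    using \<phi> unfolding genV_def by blast
  have c3: "3 \<le> card J" using J(2) s r3 by linarith
  obtain j where jJ: "j \<in> J" and j1: "j \<noteq> 1"
  proof (rule ccontr)
    assume "\<not> thesis"
    then have "J \<subseteq> {1}" using that by blast
    then have "card J \<le> card {1::nat}" by (intro card_mono) auto
    then have "card J \<le> 1" by simp
    then show False using c3 by simp
  qed
  have j: "j \<in> {1..r}" using jJ J by auto
  have j2: "2 \<le> j" using j j1 by auto
  have oddj: "odd (p j)" using oddp j j2 by auto
  define u where "u = p j"
  define v where "v = 2 * hatP r p j"
  have u0: "0 < u" using pos j by (simp add: u_def)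
  have v0: "0 < v" using hatP_pos[OF pos] by (simp add: v_def)
  have cuv: "coprime u v" using oddj coprime_hatP[OF cop j] by (simp add: u_def v_def)
  obtain a c k where ack: "M0 = a * c" "0 < a" "0 < c" "coprime a u" "c dvd u ^ k"
    using decomp[OF M0(1), of u] by blast
  define A where "A = a * v"
  define B where "B = u ^ Suc k"
  have A0: "0 < A" using ack v0 by (simp add: A_def)
  have B0: "0 < B" using u0 by (simp add: B_def)
  have cAB: "coprime A B" unfolding A_def B_def
    using ack(4) cuv by (simp add: coprime_commute[of v u])
  obtain x y where xy: "x * A + y * B = 1"
    using bezout_int[of A B] cAB by (auto simp: coprime_iff_gcd_eq_1)
  define e where "e = y * B - x * A"
  have Ae: "A dvd e - 1"
  proof -
    have "e - 1 = A * (- 2 * x)" using xy by (simp add: e_def algebra_simps)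
    then show ?thesis by simp
  qed
  have Be: "B dvd e + 1"
  proof -
    have "e + 1 = B * (2 * y)" using xy by (simp add: e_def algebra_simps)
    then show ?thesis by simp
  qed
  define M1 where "M1 = A * B"
  have M10: "0 < M1" using A0 B0 by (simp add: M1_def)
  have M01: "M0 dvd M1"
  proof -
    have "a dvd A" by (simp add: A_def)
    moreover have "c dvd B" using ack(5) unfolding B_def by (simp add: dvd_mult_right[of c "u^k" u] mult.commute)
    ultimately show ?thesis unfolding M1_def ack(1) by (rule mult_dvd_mono)
  qed
  have Mee: "M1 dvd (e - 1) * (e + 1)" unfolding M1_def using Ae Be by (rule mult_dvd_mono)
  define Gf where "Gf m = \<phi> m * X m" for m
  have Xper: "X (m + M) = X m" if "M0 dvd M" for m M
  proof -
    have "(m + M)^2 - m^2 = M * (2 * m + M)" by (simp add: power2_eq_square algebra_simps)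
    then have "M0 dvd (m + M)^2 - m^2" using that by simp
    then show ?thesis using X by (simp add: cong_iff_dvd_diff)
  qed
  have \<phi>per: "\<phi> (m + M) = \<phi> m" if "M0 dvd M" for m M
  proof -
    have "2 * Pprod r p dvd M" using M0(2) that by (rule dvd_trans)
    then have "[m + M = m] (mod (2 * Pprod r p))" by (simp add: cong_iff_dvd_diff)
    then show ?thesis unfolding \<phi>J by (rule gJ_cong)
  qed
  have Gper1: "\<forall>m. Gf (m + M1) = Gf m" using Xper[OF M01] \<phi>per[OF M01] by (simp add: Gf_def)
  have e2: "[e * e = 1] (mod M1)"
  proof -
    have "e * e - 1 = (e - 1) * (e + 1)" by (simp add: algebra_simps)
    then show ?thesis using Mee by (simp add: cong_iff_dvd_diff)
  qed
  have anti: "\<forall>m. Gf (e * m) = - Gf m"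
  proof
    fix m
    have uB: "u dvd B" by (simp add: B_def)
    have vA: "v dvd A" by (simp add: A_def)
    have c1: "[e * m = - m] (mod p j)"
    proof -
      have "u dvd e + 1" using uB Be by (rule dvd_trans)
      then have "u dvd (e + 1) * m" by simp
      then show ?thesis by (simp add: cong_iff_dvd_diff u_def algebra_simps)
    qed
    have c2: "[e * m = m] (mod (2 * hatP r p j))"
    proof -
      have "v dvd e - 1" using vA Ae by (rule dvd_trans)
      then have "v dvd (e - 1) * m" by simp
      then show ?thesis by (simp add: cong_iff_dvd_diff v_def algebra_simps)
    qed
    have "\<phi> (e * m) = - \<phi> m" unfolding \<phi>J by (rule gJ_anti[OF pos cop oddp l J(1) JJ jJ j2 c1 c2])
    moreover have "X (e * m) = X m"
    proof -
      have "(e * m)^2 - m^2 = ((e - 1) * (e + 1)) * m^2" by (simp add: power2_eq_square algebra_simps)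
      moreover have "M0 dvd (e - 1) * (e + 1)" using M01 Mee by (rule dvd_trans)
      ultimately have "M0 dvd (e * m)^2 - m^2" by simp
      then show ?thesis using X by (simp add: cong_iff_dvd_diff)
    qed
    ultimately show "Gf (e * m) = - Gf m" by (simp add: Gf_def)
  qed
  have S1: "(\<Sum>n<nat M1. Gf (int n)) = 0" by (rule inv_sum_zero[OF M10 Gper1 e2 anti])
  obtain q where q: "M1 = M0 * q" using M01 by blast
  have q0: "0 < q" using q M10 M0(1) by (simp add: zero_less_mult_iff)
  have nM1: "nat M1 = nat q * nat M0" using q q0 M0 by (simp add: nat_mult_distrib)
  have pern: "\<forall>n. Gf (int (n + nat M0)) = Gf (int n)"
    using Xper[of M0] \<phi>per[of M0] M0 by (simp add: Gf_def)
  have "(\<Sum>n<nat M1. Gf (int n)) = of_nat (nat q) * (\<Sum>n<nat M0. Gf (int n))"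
    unfolding nM1 by (rule sum_periods_nat[where G="\<lambda>n. Gf (int n)", OF pern])
  then have "(\<Sum>n<nat M0. Gf (int n)) = 0" using S1 q0 by simp
  then show ?thesis by (simp add: Gf_def)
qed



lemma V_sum_zero:
  fixes X :: "int \<Rightarrow> complex" and M0 :: int
  assumes pos: "\<forall>j\<in>{1..r}. 0 < p j"
    and cop: "\<forall>i\<in>{1..r}. \<forall>j\<in>{1..r}. i \<noteq> j \<longrightarrow> coprime (p i) (p j)"
    and oddp: "\<forall>j\<in>{2..r}. odd (p j)"
    and r3: "3 \<le> r" and s: "s \<le> r - 3"
    and g: "g \<in> Vspace r p s"
    and M0: "0 < M0" "2 * Pprod r p dvd M0"
    and X: "\<forall>m1 m2. [m1^2 = m2^2] (mod M0) \<longrightarrow> X m1 = X m2"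
  shows "(\<Sum>n<nat M0. g (int n) * X (int n)) = 0"
proof -
  obtain S c where S: "finite S" "S \<subseteq> genV r p s" and gS: "g = (\<lambda>n. \<Sum>\<phi>\<in>S. c \<phi> * \<phi> n)"
    using g unfolding Vspace_def by blast
  have "(\<Sum>n<nat M0. g (int n) * X (int n)) = (\<Sum>n<nat M0. \<Sum>\<phi>\<in>S. c \<phi> * (\<phi> (int n) * X (int n)))"
    unfolding gS by (simp add: sum_distrib_right mult.assoc)
  also have "\<dots> = (\<Sum>\<phi>\<in>S. c \<phi> * (\<Sum>n<nat M0. \<phi> (int n) * X (int n)))"
    by (subst sum.swap) (simp add: sum_distrib_left)
  also have "\<dots> = 0"
  proof (rule sum.neutral, rule ballI)
    fix \<phi> assume "\<phi> \<in> S"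
    then have "\<phi> \<in> genV r p s" using S by blast
    then show "c \<phi> * (\<Sum>n<nat M0. \<phi> (int n) * X (int n)) = 0"
      using gen_sum_zero[OF pos cop oddp r3 s _ M0 X] by simp
  qed
  finally show ?thesis .
qed

lemma V_cong:
  assumes g: "g \<in> Vspace r p s" and c: "[n = n'] (mod (2 * Pprod r p))"
  shows "g n = g n'"
proof -
  obtain S c where S: "finite S" "S \<subseteq> genV r p s" and gS: "g = (\<lambda>n. \<Sum>\<phi>\<in>S. c \<phi> * \<phi> n)"
    using g unfolding Vspace_def by blast
  have "\<phi> n = \<phi> n'" if \<phi>S: "\<phi> \<in> S" for \<phi>
  proof -
    obtain J l where "\<phi> = gJ r p J l" using \<phi>S S unfolding genV_def by blast
    then show ?thesis using gJ_cong[OF c] by simp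
  qed
  then show ?thesis unfolding gS by (intro sum.cong) auto
qed

lemma psum_bounded:
  fixes h :: "nat \<Rightarrow> complex"
  assumes T: "0 < T" "\<forall>n. h (n + T) = h n" "(\<Sum>n<T. h n) = 0"
  shows "\<exists>B. \<forall>N. norm (\<Sum>n<N. h n) \<le> B"
proof -
  define S where "S N = (\<Sum>n<N. h n)" for N
  have Sper: "S (N + T) = S N" for N
  proof (induction N)
    case 0 then show ?case using T(3) by (simp add: S_def)
  next
    case (Suc N)
    have "S (Suc N + T) = S (N + T) + h (N + T)" by (simp add: S_def)
    also have "\<dots> = S (Suc N)" using Suc T(2) by (simp add: S_def)
    finally show ?case .
  qed
  have "\<forall>N. S (N + T) = S N" using Sper by blast
  from periodic_bounded[OF T(1) this] show ?thesis by (simp add: S_def)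
qed

lemma cesaro_zero:
  fixes h :: "nat \<Rightarrow> complex"
  assumes T: "0 < T" "\<forall>n. h (n + T) = h n" "(\<Sum>n<T. h n) = 0"
  shows "(\<lambda>N. (\<Sum>n<N. h n) / of_nat N) \<longlonglongrightarrow> 0"
proof -
  obtain B where B: "\<forall>N. norm (\<Sum>n<N. h n) \<le> B" using psum_bounded[OF T] by blast
  show ?thesis
  proof (rule Lim_null_comparison)
    show "\<forall>\<^sub>F N in sequentially. norm ((\<Sum>n<N. h n) / of_nat N) \<le> B / real N"
      using B by (intro always_eventually allI) (simp add: norm_divide divide_right_mono)
    show "(\<lambda>N. B / real N) \<longlonglongrightarrow> 0" by (rule lim_const_over_n)
  qed
qed



theorem propositionB13:
  fixes r s :: nat and p :: "nat \<Rightarrow> int" and g :: "int \<Rightarrow> complex"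
  assumes "3 \<le> r"
    and "\<forall>j\<in>{1..r}. 0 < p j"
    and "\<forall>i\<in>{1..r}. \<forall>j\<in>{1..r}. i \<noteq> j \<longrightarrow> coprime (p i) (p j)"
    and "\<forall>j\<in>{2..r}. odd (p j)"
    and "s \<le> r - 3"
    and "g \<in> Vspace r p s"
  shows "(\<forall>\<alpha>::real. \<alpha> \<in> \<rat> \<longrightarrow>
            (\<exists>T::int. 0 < T \<and> (\<forall>m. g (m + T) * exp (\<i> * of_real (pi * of_int ((m + T)^2) * \<alpha> / (2 * of_int (Pprod r p))))
                                  = g m * exp (\<i> * of_real (pi * of_int (m^2) * \<alpha> / (2 * of_int (Pprod r p)))))) \<and>
            has_mean_value (\<lambda>m. g m * exp (\<i> * of_real (pi * of_int (m^2) * \<alpha> / (2 * of_int (Pprod r p))))) 0)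
       \<and> (\<forall>(\<nu>::nat) (\<alpha>::real). \<alpha> \<in> \<rat> \<longrightarrow>
            nontangential_limit_exists (\<lambda>\<tau>. Theta \<tau> \<nu> g (2 * of_int (Pprod r p))) \<alpha>)"
proof -
  note r3 = assms(1) and pos = assms(2) and cop = assms(3) and oddp = assms(4) and s = assms(5) and g = assms(6)
  define P where "P = Pprod r p"
  have P0: "0 < P" unfolding P_def by (rule Pprod_pos[OF pos])
  define Fa where "Fa \<alpha> m = g m * exp (\<i> * of_real (pi * of_int (m^2) * \<alpha> / (2 * of_int P)))" for \<alpha> :: real and m :: int
  have key: "\<exists>M0::int. 0 < M0 \<and> (\<forall>m. Fa \<alpha> (m + M0) = Fa \<alpha> m) \<and> (\<Sum>n<nat M0. Fa \<alpha> (int n)) = 0"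
    if \<alpha>: "\<alpha> \<in> \<rat>" for \<alpha>
  proof -
    obtain a b :: int where b: "0 < b" and ab: "\<alpha> = of_int a / of_int b"
      using Rats_cases'[OF \<alpha>] by metis
    define M0 where "M0 = 4 * P * b"
    have M0: "0 < M0" using P0 b by (simp add: M0_def)
    have M0d: "2 * Pprod r p dvd M0" by (simp add: M0_def P_def)
    define X where "X m = exp (\<i> * of_real (pi * of_int (m^2) * \<alpha> / (2 * of_int P)))" for m :: int
    have Xc: "X m = cis (pi * of_int (m^2) * \<alpha> / (2 * of_int P))" for m
      by (simp add: X_def cis_conv_exp)
    have Xcond: "\<forall>m1 m2. [m1^2 = m2^2] (mod M0) \<longrightarrow> X m1 = X m2"
    proof (intro allI impI)
      fix m1 m2 :: int assume "[m1^2 = m2^2] (mod M0)"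
      then obtain t where t: "m1^2 - m2^2 = M0 * t" by (auto simp: cong_iff_dvd_diff dvd_def)
      have "pi * of_int (m1^2) * \<alpha> / (2 * of_int P) = pi * of_int (m2^2) * \<alpha> / (2 * of_int P) + 2 * pi * of_int (t * a)"
      proof -
        have e: "m1^2 = m2^2 + M0 * t" using t by simp
        have "real_of_int (m1^2) = of_int (m2^2) + of_int (M0 * t)" unfolding e of_int_add ..
        then show ?thesis using b P0 ab by (simp add: M0_def field_simps)
      qed
      then show "X m1 = X m2" unfolding Xc by (simp flip: cis_mult)
    qed
    have zero: "(\<Sum>n<nat M0. g (int n) * X (int n)) = 0"
      by (rule V_sum_zero[OF pos cop oddp r3 s g M0 M0d Xcond])
    have per: "Fa \<alpha> (m + M0) = Fa \<alpha> m" for m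
    proof -
      have "[m + M0 = m] (mod (2 * Pprod r p))" using M0d by (simp add: cong_iff_dvd_diff)
      then have "g (m + M0) = g m" by (rule V_cong[OF g])
      moreover have "X (m + M0) = X m"
      proof -
        have "(m + M0)^2 - m^2 = M0 * (2 * m + M0)" by (simp add: power2_eq_square algebra_simps)
        then have "[(m + M0)^2 = m^2] (mod M0)" by (simp add: cong_iff_dvd_diff)
        then show ?thesis using Xcond by blast
      qed
      ultimately show ?thesis by (simp add: Fa_def X_def)
    qed
    show ?thesis using M0 per zero by (intro exI[of _ M0]) (simp add: Fa_def X_def)
  qed
  have hkey: "\<exists>T::nat. 0 < T \<and> (\<forall>n. Fa \<alpha> (int (Suc (n + T))) = Fa \<alpha> (int (Suc n)))
      \<and> (\<Sum>n<T. Fa \<alpha> (int (Suc n))) = 0" if \<alpha>: "\<alpha> \<in> \<rat>" for \<alpha>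
  proof -
    obtain M0 where M0: "0 < M0" "\<forall>m. Fa \<alpha> (m + M0) = Fa \<alpha> m" "(\<Sum>n<nat M0. Fa \<alpha> (int n)) = 0"
      using key[OF \<alpha>] by blast
    define T where "T = nat M0"
    have T: "0 < T" "int T = M0" using M0 by (auto simp: T_def)
    have per: "Fa \<alpha> (int (Suc (n + T))) = Fa \<alpha> (int (Suc n))" for n
      using M0(2)[rule_format, of "int (Suc n)"] T(2) by (simp add: algebra_simps)
    have "(\<Sum>n<Suc T. Fa \<alpha> (int n)) = Fa \<alpha> 0 + (\<Sum>n<T. Fa \<alpha> (int (Suc n)))"
      by (subst sum.lessThan_Suc_shift) simp
    moreover have "(\<Sum>n<Suc T. Fa \<alpha> (int n)) = (\<Sum>n<T. Fa \<alpha> (int n)) + Fa \<alpha> (int T)" by simp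
    moreover have "Fa \<alpha> (int T) = Fa \<alpha> 0" using M0(2)[rule_format, of 0] T(2) by simp
    ultimately have "(\<Sum>n<T. Fa \<alpha> (int (Suc n))) = 0" using M0(3) by (simp add: T_def)
    then show ?thesis using T per by blast
  qed
  have part1: "(\<exists>T::int. 0 < T \<and> (\<forall>m. Fa \<alpha> (m + T) = Fa \<alpha> m)) \<and> has_mean_value (Fa \<alpha>) 0"
    if \<alpha>: "\<alpha> \<in> \<rat>" for \<alpha>
  proof
    show "\<exists>T::int. 0 < T \<and> (\<forall>m. Fa \<alpha> (m + T) = Fa \<alpha> m)" using key[OF \<alpha>] by blast
    obtain T where T: "0 < T" "\<forall>n. Fa \<alpha> (int (Suc (n + T))) = Fa \<alpha> (int (Suc n))"
      "(\<Sum>n<T. Fa \<alpha> (int (Suc n))) = 0" using hkey[OF \<alpha>] by blast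
    have "(\<lambda>N. (\<Sum>n<N. Fa \<alpha> (int (Suc n))) / of_nat N) \<longlonglongrightarrow> 0"
      by (rule cesaro_zero[where h="\<lambda>n. Fa \<alpha> (int (Suc n))"]) (use T in auto)
    moreover have "(\<Sum>m=1..N. Fa \<alpha> (int m)) = (\<Sum>n<N. Fa \<alpha> (int (Suc n)))" for N
      using sum.atLeast1_atMost_eq[of "\<lambda>m. Fa \<alpha> (int m)" N] by simp
    ultimately show "has_mean_value (Fa \<alpha>) 0" unfolding has_mean_value_def by simp
  qed
  have part2: "nontangential_limit_exists (\<lambda>\<tau>. Theta \<tau> \<nu> g (2 * of_int P)) \<alpha>"
    if \<alpha>: "\<alpha> \<in> \<rat>" for \<alpha> \<nu>
  proof -
    obtain T where T: "0 < T" "\<forall>n. Fa \<alpha> (int (Suc (n + T))) = Fa \<alpha> (int (Suc n))"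
      "(\<Sum>n<T. Fa \<alpha> (int (Suc n))) = 0" using hkey[OF \<alpha>] by blast
    define c where "c = pi / (2 * of_int P)"
    have c0: "0 < c" using P0 by (simp add: c_def)
    have lim: "\<exists>L. \<forall>C>0. ((\<lambda>\<tau>. \<Sum>n. Fa \<alpha> (int (Suc n)) * ((of_nat (Suc n))^\<nu> * exp (\<i> * of_real c * (of_nat (Suc n))^2 * (\<tau> - of_real \<alpha>))))
            \<longlongrightarrow> L) (at (of_real \<alpha>) within stolz \<alpha> C)"
      by (rule nt_limit_generic[where f="\<lambda>n. Fa \<alpha> (int (Suc n))"]) (use T c0 in auto)
    have eq: "Theta \<tau> \<nu> g (2 * of_int P) = (\<Sum>n. Fa \<alpha> (int (Suc n)) * ((of_nat (Suc n))^\<nu> * exp (\<i> * of_real c * (of_nat (Suc n))^2 * (\<tau> - of_real \<alpha>))))" for \<tau>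
      unfolding Theta_def
    proof (rule suminf_cong)
      fix n
      define m where "m = Suc n"
      have arg: "\<i> * pi * of_nat m ^ 2 * \<tau> / of_real (2 * of_int P)
          = \<i> * of_real (pi * of_int ((int m)^2) * \<alpha> / (2 * of_int P)) + \<i> * of_real c * (of_nat m)^2 * (\<tau> - of_real \<alpha>)"
        using P0 by (simp add: c_def field_simps)
      show "of_nat (Suc n) ^ \<nu> * g (int (Suc n)) * exp (\<i> * pi * of_nat (Suc n) ^ 2 * \<tau> / of_real (2 * of_int P))
          = Fa \<alpha> (int (Suc n)) * ((of_nat (Suc n))^\<nu> * exp (\<i> * of_real c * (of_nat (Suc n))^2 * (\<tau> - of_real \<alpha>)))"
        unfolding m_def[symmetric] arg exp_add Fa_def by (simp add: ac_simps)
    qed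
    show ?thesis unfolding nontangential_limit_exists_def eq using lim by simp
  qed
  show ?thesis using part1 part2 unfolding Fa_def P_def by blast
qed

end
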